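(* For positive integers $n$ and $i$ with $n\ge(2i)^{100}$, $$F(n,i)\le\frac{i^{2n+i}}{n^{(i-1)/2}}.$$
   Context: For positive integers $m,i$, $F(m,i):=\sum_{v_1,\dots,v_i\in\mathbb Z_{\ge0},\ v_1+\cdots+v_i=m}\binom{m}{v_1,\dots,v_i}^2$, where $\binom{m}{v_1,\dots,v_i}=\frac{m!}{v_1!\cdots v_i!}$ is the multinomial coefficient. *)

theory Defs
  imports "HOL-Analysis.Analysis"
begin

definition multinom :: "nat \<Rightarrow> nat \<Rightarrow> (nat \<Rightarrow> nat) \<Rightarrow> nat" where
  "multinom m i v = fact m div (\<Prod>j<i. fact (v j))"

definition tuples :: "nat \<Rightarrow> nat \<Rightarrow> (nat \<Rightarrow> nat) set" where
  "tuples m i = {v. (\<forall>j. i \<le> j \<longrightarrow> v j = 0) \<and> (\<Sum>j<i. v j) = m}"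

definition F :: "nat \<Rightarrow> nat \<Rightarrow> nat" where
  "F m i = (\<Sum>v\<in>tuples m i. (multinom m i v)^2)"

end

theory Submission
  imports Defs
begin


lemma ln_lower: fixes x :: real assumes "x \<ge> 0" shows "2*x/(2+x) \<le> ln (1+x)"
proof -
  let ?g = "\<lambda>t::real. ln (1+t) - 2*t/(2+t)"
  have "?g 0 \<le> ?g x"
  proof (rule deriv_nonneg_imp_mono[where g = ?g and a = 0 and b = x and g' = "\<lambda>t. 1/(1+t) - 4/(2+t)^2"])
    fix t assume t: "t \<in> {0..x}"
    then have t0: "t \<ge> 0" by auto
    show "(?g has_real_derivative 1/(1+t) - 4/(2+t)^2) (at t)"
      apply (auto intro!: derivative_eq_intros)
      using t0 by (auto simp: power2_eq_square)
    have "4*(1+t) \<le> (2+t)^2" by (simp add: power2_eq_square algebra_simps)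
    then show "1/(1+t) - 4/(2+t)^2 \<ge> 0" using t0 by (simp add: field_simps)
  qed (use assms in auto)
  then show ?thesis by simp
qed

lemma ln_upper: fixes x :: real assumes "x \<ge> 0" shows "ln (1+x) \<le> x*(6+x)/(6+4*x)"
proof -
  let ?g = "\<lambda>t::real. t*(6+t)/(6+4*t) - ln (1+t)"
  have "?g 0 \<le> ?g x"
  proof (rule deriv_nonneg_imp_mono[where g = ?g and a = 0 and b = x and g' = "\<lambda>t. (36+12*t+4*t^2)/(6+4*t)^2 - 1/(1+t)"])
    fix t assume t: "t \<in> {0..x}"
    then have t0: "t \<ge> 0" by auto
    show "(?g has_real_derivative (36+12*t+4*t^2)/(6+4*t)^2 - 1/(1+t)) (at t)"
      apply (auto intro!: derivative_eq_intros)
      using t0 by (auto simp: power2_eq_square algebra_simps)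
    have "(6+4*t)^2 \<le> (1+t)*(36+12*t+4*t^2)" using t0 by (simp add: power2_eq_square algebra_simps)
    then show "(36+12*t+4*t^2)/(6+4*t)^2 - 1/(1+t) \<ge> 0" using t0 by (simp add: field_simps)
  qed (use assms in auto)
  then show ?thesis by simp
qed



definition dd :: "nat \<Rightarrow> real" where
  "dd k = ln (fact k) - (real k + 1/2) * ln (real k) + real k"

lemma dd_step: assumes "k \<ge> 1" shows "dd k - dd (Suc k) = (real k + 1/2) * ln (1 + 1/real k) - 1"
proof -
  have k0: "real k > 0" using assms by simp
  have e: "(fact (Suc k)::real) = (1 + real k) * fact k" by (simp add: algebra_simps)
  have h1: "ln (fact (Suc k) :: real) = ln (1 + real k) + ln (fact k)"
  proof -
    have "ln ((1+real k) * fact k) = ln (1+real k) + ln (fact k)" by (rule ln_mult_pos) auto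
    with e show ?thesis by simp
  qed
  have "1 + 1/real k = (1 + real k) / real k" using k0 by (simp add: field_simps)
  then have h2: "ln (1 + 1/real k) = ln (1 + real k) - ln (real k)" using k0 by (simp add: ln_div)
  have h3: "real (Suc k) = 1 + real k" by simp
  show ?thesis unfolding dd_def h1 h2 h3 by (simp add: algebra_simps)
qed

lemma dd_step_lower: assumes "k \<ge> 1" shows "dd (Suc k) \<le> dd k"
proof -
  have k0: "real k > 0" using assms by simp
  have "2*(1/real k)/(2+1/real k) \<le> ln (1 + 1/real k)" by (rule ln_lower) simp
  moreover have "2*(1/real k)/(2+1/real k) = 2/(2*real k+1)" using k0 by (simp add: field_simps)
  ultimately have "1 \<le> (real k + 1/2) * ln (1 + 1/real k)"
    using k0 by (simp add: field_simps)
  then show ?thesis using dd_step[OF assms] by simp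
qed

lemma dd_step_upper: assumes "k \<ge> 1" shows "dd k - dd (Suc k) \<le> 1/(12*(real k)^2)"
proof -
  have k0: "real k > 0" using assms by simp
  define x where "x = 1 / real k"
  have x0: "x > 0" using k0 by (simp add: x_def)
  have "ln (1 + x) \<le> x*(6+x)/(6+4*x)" by (rule ln_upper) (use x0 in simp)
  have hk: "real k + 1/2 = (2+x)/(2*x)" using k0 by (simp add: x_def field_simps)
  have "(real k + 1/2) * ln (1 + x) \<le> (2+x)/(2*x) * (x*(6+x)/(6+4*x))"
    unfolding hk by (rule mult_left_mono) (use \<open>ln (1 + x) \<le> _\<close> x0 in auto)
  also have "\<dots> = (2+x)*(6+x)/(2*(6+4*x))"
  proof -
    have "0 < x * 12 + x * (x * 8)" using x0 by (intro add_pos_pos) auto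
    then have "x * 12 + x * (x * 8) \<noteq> 0" by simp
    then show ?thesis using x0 by (simp add: field_simps)
  qed
  also have "\<dots> \<le> 1 + x^2/12"
    using x0 by (simp add: field_simps power2_eq_square power3_eq_cube)
  finally have "(real k + 1/2) * ln (1 + x) \<le> 1 + x^2/12" .
  moreover have "x^2/12 = 1/(12*(real k)^2)" by (simp add: x_def power2_eq_square)
  ultimately show ?thesis using dd_step[OF assms] unfolding x_def by simp
qed

lemma dd_1: "dd (Suc 0) = 1" by (simp add: dd_def)

lemma dd_upper: "k \<ge> 1 \<Longrightarrow> dd k \<le> 1"
proof (induction k rule: nat_induct_at_least)
  case base then show ?case by (simp add: dd_1)
next
  case (Suc k) then show ?case using dd_step_lower[of k] by simp
qed

lemma dd_lower_aux: "k \<ge> 1 \<Longrightarrow> 5/6 + 1/(6*(2*real k - 1)) \<le> dd k"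
proof (induction k rule: nat_induct_at_least)
  case base then show ?case by (simp add: dd_1)
next
  case (Suc k)
  have k1: "real k \<ge> 1" using Suc by simp
  have a: "2*real k - 1 > 0" using k1 by simp
  have kk: "real k * real k \<ge> 1" using k1 mult_mono[of 1 "real k" 1 "real k"] by simp
  then have pp: "real k * (real k * 24) - 6 > 0" "real k * (real k * 144) - 36 > 0" by simp_all
  have "1/(6*(2*real k - 1)) - 1/(6*(2*real (Suc k) - 1)) = 2/(6*((2*real k - 1)*(2*real k+1)))"
    using a pp by (simp add: field_simps)
  also have "\<dots> \<ge> 1/(12*(real k)^2)"
    using a k1 kk by (simp add: divide_simps power2_eq_square algebra_simps)
  finally have "1/(6*(2*real k - 1)) - 1/(6*(2*real (Suc k) - 1)) \<ge> 1/(12*(real k)^2)" .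
  then show ?case using Suc dd_step_upper[of k] by simp
qed

lemma dd_lower: "k \<ge> 1 \<Longrightarrow> 5/6 \<le> dd k"
proof -
  assume k: "k \<ge> 1"
  then have "0 \<le> 1/(6*(2*real k - 1))" by simp
  then show ?thesis using dd_lower_aux[OF k] by linarith
qed

lemma fact_dd: assumes "k \<ge> 1"
  shows "fact k = exp (dd k) * sqrt (real k) * real k ^ k / exp (real k)"
proof -
  have k0: "real k > 0" using assms by simp
  have "exp ((real k + 1/2) * ln (real k)) = real k ^ k * sqrt (real k)"
  proof -
    have "exp ((real k + 1/2) * ln (real k)) = exp (real k * ln (real k)) * exp (ln (real k) / 2)"
      by (simp add: algebra_simps exp_add[symmetric])
    also have "exp (real k * ln (real k)) = real k ^ k"
      using k0 by (simp add: exp_of_nat_mult)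
    also have "exp (ln (real k) / 2) = sqrt (real k)"
      using k0 by (simp add: powr_half_sqrt[symmetric] powr_def)
    finally show ?thesis .
  qed
  moreover have "(fact k :: real) = exp (ln (fact k))" by simp
  moreover have "ln (fact k) = dd k + (real k + 1/2) * ln (real k) - real k" by (simp add: dd_def)
  ultimately show ?thesis by (simp add: exp_add exp_diff)
qed

lemma fact_upper: assumes "k \<ge> 1" shows "fact k \<le> exp 1 * sqrt (real k) * real k ^ k / exp (real k)"
  unfolding fact_dd[OF assms] using dd_upper[OF assms]
  by (intro divide_right_mono mult_right_mono) auto

lemma fact_lower: assumes "k \<ge> 1" shows "exp (5/6) * sqrt (real k) * real k ^ k / exp (real k) \<le> fact k"
  unfolding fact_dd[OF assms] using dd_lower[OF assms]
  by (intro divide_right_mono mult_right_mono) auto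



lemma tuples_Suc: "v \<in> tuples m (Suc i) \<longleftrightarrow> v i \<le> m \<and> v(i:=0) \<in> tuples (m - v i) i"
proof -
  have s: "(\<Sum>j<i. (v(i:=0)) j) = (\<Sum>j<i. v j)" by (rule sum.cong) auto
  have a: "(\<forall>j. Suc i \<le> j \<longrightarrow> v j = 0) \<longleftrightarrow> (\<forall>j. i \<le> j \<longrightarrow> (v(i:=0)) j = 0)"
    by (auto simp: Suc_le_eq)
  show ?thesis unfolding tuples_def mem_Collect_eq a s by auto
qed

lemma tuples_0: "tuples m 0 = (if m = 0 then {\<lambda>_. 0} else {})"
  by (auto simp: tuples_def)

lemma prod_dvd: "v \<in> tuples m i \<Longrightarrow> (\<Prod>j<i. fact (v j)) dvd (fact m :: nat)"
proof (induction i arbitrary: m v)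
  case 0 then show ?case by simp
next
  case (Suc i)
  from Suc.prems have vi: "v i \<le> m" and u: "v(i:=0) \<in> tuples (m - v i) i" by (auto simp: tuples_Suc)
  have p: "(\<Prod>j<i. fact ((v(i:=0)) j)) = (\<Prod>j<i. fact (v j) :: nat)" by (rule prod.cong) auto
  from Suc.IH[OF u] have "(\<Prod>j<i. fact (v j)) dvd (fact (m - v i) :: nat)" by (simp only: p)
  then have "(\<Prod>j<i. fact (v j)) * fact (v i) dvd (fact (m - v i) * fact (v i) :: nat)" by (rule mult_dvd_mono) simp
  also have "\<dots> dvd fact m" using fact_fact_dvd_fact[of "m - v i" "v i"] vi by simp
  finally show ?case by simp
qed

lemma multinom_real: "v \<in> tuples m i \<Longrightarrow> real (multinom m i v) = fact m / (\<Prod>j<i. fact (v j))"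
  unfolding multinom_def by (simp add: real_of_nat_div prod_dvd of_nat_prod)

lemma tuples_Suc_image: "tuples m (Suc i) = (\<lambda>(k,u). u(i:=k)) ` (SIGMA k:{..m}. tuples (m-k) i)"
proof (intro equalityI subsetI)
  fix v assume v: "v \<in> tuples m (Suc i)"
  then have "v i \<le> m" "v(i:=0) \<in> tuples (m - v i) i" by (auto simp: tuples_Suc)
  moreover have "v = (v(i:=0))(i := v i)" by simp
  ultimately show "v \<in> (\<lambda>(k,u). u(i:=k)) ` (SIGMA k:{..m}. tuples (m-k) i)"
    by (intro image_eqI[of _ _ "(v i, v(i:=0))"]) auto
next
  fix v assume "v \<in> (\<lambda>(k,u). u(i:=k)) ` (SIGMA k:{..m}. tuples (m-k) i)"
  then obtain k u where k: "k \<le> m" and u: "u \<in> tuples (m-k) i" and v: "v = u(i:=k)" by auto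
  have "u i = 0" using u by (simp add: tuples_def)
  then have "(u(i:=k))(i:=0) = u" by auto
  then show "v \<in> tuples m (Suc i)" using k u v by (simp add: tuples_Suc)
qed

lemma inj_upd: "inj_on (\<lambda>(k,u). u(i:=k)) (SIGMA k:{..m}. tuples (m-k) i)"
proof (rule inj_onI, clarify)
  fix k u k' u' assume u: "u \<in> tuples (m-k) i" and u': "u' \<in> tuples (m-k') i" and e: "u(i:=k) = u'(i:=k')"
  have "u i = 0" "u' i = 0" using u u' by (simp_all add: tuples_def)
  from e have "k = k'" by (metis fun_upd_same)
  moreover have "u = u'"
  proof
    fix j show "u j = u' j" using e \<open>u i = 0\<close> \<open>u' i = 0\<close> by (cases "j = i") (auto dest: fun_cong[of _ _ j])
  qed
  ultimately show "k = k' \<and> u = u'" by simp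
qed

lemma finite_tuples: "finite (tuples m i)"
proof (induction i arbitrary: m)
  case 0 then show ?case by (simp add: tuples_0)
next
  case (Suc i) then show ?case unfolding tuples_Suc_image by auto
qed

lemma sum_multinom: "(\<Sum>v\<in>tuples m i. real (multinom m i v)) = real i ^ m"
proof (induction i arbitrary: m)
  case 0 then show ?case by (simp add: tuples_0 multinom_def)
next
  case (Suc i)
  have "(\<Sum>v\<in>tuples m (Suc i). real (multinom m (Suc i) v))
      = (\<Sum>(k,u)\<in>(SIGMA k:{..m}. tuples (m-k) i). real (multinom m (Suc i) (u(i:=k))))"
    unfolding tuples_Suc_image by (subst sum.reindex[OF inj_upd]) (simp add: case_prod_unfold)
  also have "\<dots> = (\<Sum>k\<le>m. \<Sum>u\<in>tuples (m-k) i. real (multinom m (Suc i) (u(i:=k))))"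
    by (rule sum.Sigma[symmetric]) (auto simp: finite_tuples)
  also have "\<dots> = (\<Sum>k\<le>m. \<Sum>u\<in>tuples (m-k) i. real (m choose k) * real (multinom (m-k) i u))"
  proof (intro sum.cong refl)
    fix k u assume k: "k \<in> {..m}" and u: "u \<in> tuples (m-k) i"
    have mem: "u(i:=k) \<in> tuples m (Suc i)" using k u unfolding tuples_Suc_image by auto
    have p: "(\<Prod>j<i. fact ((u(i:=k)) j)) = (\<Prod>j<i. fact (u j) :: real)" by (rule prod.cong) auto
    have "real (multinom m (Suc i) (u(i:=k))) = fact m / ((\<Prod>j<i. fact (u j)) * fact k)"
      using multinom_real[OF mem] by (simp add: p)
    also have "\<dots> = real (m choose k) * (fact (m-k) / (\<Prod>j<i. fact (u j)))"
      using k by (simp add: binomial_fact field_simps)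
    also have "\<dots> = real (m choose k) * real (multinom (m-k) i u)"
      by (simp add: multinom_real[OF u])
    finally show "real (multinom m (Suc i) (u(i:=k))) = real (m choose k) * real (multinom (m-k) i u)" .
  qed
  also have "\<dots> = (\<Sum>k\<le>m. real (m choose k) * real i ^ (m-k))"
    by (simp add: sum_distrib_left[symmetric] Suc.IH)
  also have "\<dots> = (1 + real i) ^ m"
    by (simp add: binomial_ring)
  finally show ?case by simp
qed



lemma prod_two: assumes "finite A" "a \<in> A" "b \<in> A" "a \<noteq> b"
  shows "prod g A = g a * g b * prod g (A - {a} - {b})"
  using assms by (simp add: prod.remove[of A a] prod.remove[of "A - {a}" b] mult.assoc)

lemma sum_two: assumes "finite A" "a \<in> A" "b \<in> A" "a \<noteq> b"
  shows "sum g A = g a + g b + sum g (A - {a} - {b})"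
  using assms by (simp add: sum.remove[of A a] sum.remove[of "A - {a}" b] add.assoc)

lemma maximizer_balanced:
  assumes w: "w \<in> tuples n i" and max: "\<forall>v\<in>tuples n i. multinom n i v \<le> multinom n i w"
    and a: "a < i" and b: "b < i"
  shows "w a \<le> w b + 1"
proof (rule ccontr)
  assume "\<not> w a \<le> w b + 1"
  then have gt: "w a \<ge> w b + 2" by simp
  then have ab: "a \<noteq> b" by auto
  define w' where "w' = w(a := w a - 1, b := w b + 1)"
  have rest: "\<And>j. j \<noteq> a \<Longrightarrow> j \<noteq> b \<Longrightarrow> w' j = w j" by (simp add: w'_def)
  have w'a: "w' a = w a - 1" and w'b: "w' b = w b + 1" using ab by (simp_all add: w'_def)
  let ?A = "{..<i}"
  have fin: "finite ?A" and aA: "a \<in> ?A" and bA: "b \<in> ?A" using a b by auto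
  have sr: "sum w' (?A - {a} - {b}) = sum w (?A - {a} - {b})" by (rule sum.cong) (auto simp: rest)
  have pr: "(\<Prod>j\<in>?A - {a} - {b}. fact (w' j)) = (\<Prod>j\<in>?A - {a} - {b}. fact (w j) :: real)"
    by (rule prod.cong) (auto simp: rest)
  have "w' \<in> tuples n i"
  proof -
    have "\<forall>j. i \<le> j \<longrightarrow> w' j = 0" using w a b rest by (auto simp: tuples_def)
    moreover have "sum w' ?A = sum w ?A"
      using sum_two[OF fin aA bA ab, of w'] sum_two[OF fin aA bA ab, of w] sr w'a w'b gt by simp
    ultimately show ?thesis using w by (simp add: tuples_def)
  qed
  then have le: "real (multinom n i w') \<le> real (multinom n i w)" using max by simp
  define R where "R = (\<Prod>j\<in>?A - {a} - {b}. fact (w j) :: real)"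
  have R0: "R > 0" unfolding R_def by (rule prod_pos) auto
  have e1: "real (multinom n i w) = fact n / (fact (w a) * fact (w b) * R)"
    using multinom_real[OF w] prod_two[OF fin aA bA ab, of "\<lambda>j. fact (w j) :: real"] by (simp add: R_def)
  have e2: "real (multinom n i w') = fact n / (fact (w a - 1) * fact (w b + 1) * R)"
    using multinom_real[OF \<open>w' \<in> _\<close>] prod_two[OF fin aA bA ab, of "\<lambda>j. fact (w' j) :: real"] w'a w'b pr
    by (simp add: R_def)
  have fa: "(fact (w a) :: real) = real (w a) * fact (w a - 1)"
    using gt by (metis fact_reduce le_add2 le_trans of_nat_fact zero_less_Suc numeral_2_eq_2 not_less_eq_eq gr0I le_zero_eq Suc_n_not_le_n)
  have fb: "(fact (w b + 1) :: real) = real (w b + 1) * fact (w b)" by simp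
  define Z where "Z = fact n / (fact (w a - 1) * fact (w b) * R :: real)"
  have pos: "Z > 0" using R0 by (simp add: Z_def)
  have m1: "real (multinom n i w') = Z / real (w b + 1)"
    unfolding e2 fb Z_def by (simp add: field_simps)
  have m2: "real (multinom n i w) = Z / real (w a)"
    unfolding e1 fa Z_def by (simp add: field_simps)
  have "Z / real (w a) < Z / real (w b + 1)"
    by (rule divide_strict_left_mono) (use gt pos in auto)
  then have "real (multinom n i w) < real (multinom n i w')" unfolding m1 m2 .
  with le show False by simp
qed



lemma gibbs:
  assumes i: "i > 0" and w1: "\<forall>j<i. w j \<ge> 1" and s: "(\<Sum>j<i. w j) = n"
  shows "real n ^ n \<le> real i ^ n * (\<Prod>j<i. real (w j) ^ w j)"
proof -
  have n0: "n \<ge> 1"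
  proof -
    have "w 0 \<le> (\<Sum>j<i. w j)" using i by (intro member_le_sum) auto
    then show ?thesis using w1 i s by force
  qed
  let ?N = "real n" and ?I = "real i"
  have N0: "?N > 0" and I0: "?I > 0" using n0 i by auto
  have key: "real (w j) * (ln ?N - ln ?I - ln (real (w j))) \<le> ?N/?I - real (w j)" if j: "j < i" for j
  proof -
    have wj: "real (w j) > 0" using w1 j by (simp add: Suc_le_eq)
    have "ln (?N / (?I * real (w j))) \<le> ?N / (?I * real (w j)) - 1"
      by (rule ln_le_minus_one) (use N0 I0 wj in simp)
    moreover have "ln (?N / (?I * real (w j))) = ln ?N - ln ?I - ln (real (w j))"
      using N0 I0 wj by (simp add: ln_div ln_mult_pos)
    ultimately have "ln ?N - ln ?I - ln (real (w j)) \<le> ?N / (?I * real (w j)) - 1" by simp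
    then have "real (w j) * (ln ?N - ln ?I - ln (real (w j))) \<le> real (w j) * (?N / (?I * real (w j)) - 1)"
      using wj by (simp add: mult_left_mono)
    also have "\<dots> = ?N/?I - real (w j)" using wj by (simp add: field_simps)
    finally show ?thesis .
  qed
  have "(\<Sum>j<i. real (w j) * (ln ?N - ln ?I - ln (real (w j)))) \<le> (\<Sum>j<i. ?N/?I - real (w j))"
    by (rule sum_mono) (use key in auto)
  also have "\<dots> = 0" using s I0 by (simp add: sum_subtractf of_nat_sum[symmetric])
  finally have h: "(\<Sum>j<i. real (w j) * (ln ?N - ln ?I - ln (real (w j)))) \<le> 0" .
  have sN: "(\<Sum>j<i. real (w j)) = ?N" using s by (simp add: of_nat_sum[symmetric])
  have "(\<Sum>j<i. real (w j) * (ln ?N - ln ?I - ln (real (w j))))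
       = (\<Sum>j<i. real (w j)) * ln ?N - (\<Sum>j<i. real (w j)) * ln ?I - (\<Sum>j<i. real (w j) * ln (real (w j)))"
    by (simp add: sum_distrib_right sum_subtractf right_diff_distrib)
  then have "(\<Sum>j<i. real (w j) * (ln ?N - ln ?I - ln (real (w j))))
       = ?N * ln ?N - ?N * ln ?I - (\<Sum>j<i. real (w j) * ln (real (w j)))" by (simp only: sN)
  with h have ineq: "?N * ln ?N \<le> ?N * ln ?I + (\<Sum>j<i. real (w j) * ln (real (w j)))" by simp
  have "?N ^ n = exp (?N * ln ?N)" using N0 by (simp add: exp_of_nat_mult)
  also have "\<dots> \<le> exp (?N * ln ?I + (\<Sum>j<i. real (w j) * ln (real (w j))))" using ineq by simp
  also have "\<dots> = ?I ^ n * (\<Prod>j<i. exp (real (w j) * ln (real (w j))))"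
    using I0 by (simp add: exp_add exp_sum exp_of_nat_mult)
  also have "(\<Prod>j<i. exp (real (w j) * ln (real (w j)))) = (\<Prod>j<i. real (w j) ^ w j)"
  proof (rule prod.cong)
    fix j assume "j \<in> {..<i}"
    then have "real (w j) > 0" using w1 by (simp add: Suc_le_eq)
    then show "exp (real (w j) * ln (real (w j))) = real (w j) ^ w j" by (simp add: exp_of_nat_mult)
  qed simp
  finally show ?thesis .
qed



lemma max_bound:
  assumes i2: "i \<ge> 2" and ni: "2*i \<le> n" and w: "w \<in> tuples n i"
    and bal: "\<And>a b. a < i \<Longrightarrow> b < i \<Longrightarrow> w a \<le> w b + 1"
  shows "real (multinom n i w) * sqrt (real n) ^ (i-1) \<le> real i ^ (n+i)"
proof -
  let ?N = "real n" and ?I = "real i"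
  define c where "c = exp (5/6::real)"
  have s: "(\<Sum>j<i. w j) = n" using w by (simp add: tuples_def)
  have lowb: "n \<le> i * (w b + 1)" if b: "b < i" for b
  proof -
    have "(\<Sum>j<i. w j) \<le> (\<Sum>j<i. w b + 1)" by (rule sum_mono) (use bal b in auto)
    then show ?thesis using s by simp
  qed
  have w1: "\<forall>j<i. w j \<ge> 1"
  proof (intro allI impI)
    fix j assume j: "j < i"
    show "w j \<ge> 1"
    proof (rule ccontr)
      assume "\<not> w j \<ge> 1"
      then have "w j = 0" by simp
      with lowb[OF j] ni i2 show False by simp
    qed
  qed
  have wl: "(?N - ?I) / ?I \<le> real (w j)" if j: "j < i" for j
  proof -
    have "?N \<le> ?I * (real (w j) + 1)" using lowb[OF j] by (metis of_nat_1 of_nat_add of_nat_le_iff of_nat_mult)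
    then show ?thesis using i2 by (simp add: field_simps)
  qed
  have I0: "?I > 0" and I2: "?I \<ge> 2" and NI: "?N \<ge> 2 * ?I" using i2 ni by auto
  have N0: "?N > 0" using I0 NI by simp
  define W where "W = (\<Prod>j<i. real (w j) ^ w j)"
  define Q where "Q = (\<Prod>j<i. sqrt (real (w j)))"
  define s0 where "s0 = sqrt ((?N - ?I) / ?I)"
  have W0: "W > 0" unfolding W_def using w1 by (intro prod_pos) (auto simp: Suc_le_eq)
  have s00: "s0 > 0" unfolding s0_def using I0 NI by simp
  have Ql: "s0 ^ i \<le> Q"
  proof -
    have "(\<Prod>j<i. s0) \<le> Q" unfolding Q_def s0_def
      by (rule prod_mono) (use wl I0 NI in \<open>auto intro: real_sqrt_le_mono\<close>)
    then show ?thesis by simp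
  qed
  have Q0: "Q > 0" using Ql s00 by (meson less_le_trans zero_less_power)
  have Pl: "c^i * Q * W / exp ?N \<le> (\<Prod>j<i. fact (w j) :: real)"
  proof -
    have "(\<Prod>j<i. c * sqrt (real (w j)) * real (w j) ^ w j / exp (real (w j))) \<le> (\<Prod>j<i. fact (w j) :: real)"
      by (rule prod_mono) (use w1 in \<open>auto simp: c_def intro!: fact_lower\<close>)
    moreover have "(\<Prod>j<i. c * sqrt (real (w j)) * real (w j) ^ w j / exp (real (w j)))
        = c^i * Q * W / (\<Prod>j<i. exp (real (w j)))"
      by (simp add: Q_def W_def prod.distrib prod_dividef)
    moreover have "(\<Prod>j<i. exp (real (w j))) = exp ?N"
      by (simp add: exp_sum[symmetric] s of_nat_sum[symmetric])
    ultimately show ?thesis by simp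
  qed
  have Fu: "fact n \<le> exp 1 * sqrt ?N * ?N ^ n / exp ?N"
    by (rule fact_upper) (use ni i2 in simp)
  have G: "?N ^ n \<le> ?I ^ n * W" unfolding W_def
    by (rule gibbs) (use i2 w1 s in auto)
  have c0: "c > 0" by (simp add: c_def)
  have P0: "c^i * Q * W / exp ?N > 0" using c0 Q0 W0 by simp
  have "real (multinom n i w) = fact n / (\<Prod>j<i. fact (w j))" by (rule multinom_real[OF w])
  also have "\<dots> \<le> (exp 1 * sqrt ?N * ?N ^ n / exp ?N) / (c^i * Q * W / exp ?N)"
    by (rule frac_le) (use Fu Pl P0 in auto)
  also have "\<dots> = exp 1 * sqrt ?N * ?N ^ n / (c^i * Q * W)" by (simp add: field_simps)
  also have "\<dots> \<le> exp 1 * sqrt ?N * (?I ^ n * W) / (c^i * Q * W)"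
    by (rule divide_right_mono) (use G c0 Q0 W0 in \<open>auto intro!: mult_left_mono\<close>)
  also have "\<dots> = exp 1 * sqrt ?N * ?I ^ n / (c^i * Q)" using W0 by (simp add: field_simps)
  also have "\<dots> \<le> exp 1 * sqrt ?N * ?I ^ n / (c^i * s0^i)"
    by (rule divide_left_mono) (use Ql c0 s00 Q0 in \<open>auto intro: mult_left_mono\<close>)
  finally have M: "real (multinom n i w) \<le> exp 1 * sqrt ?N * ?I ^ n / (c^i * s0^i)" .
  have sq: "sqrt ?N * sqrt ?N ^ (i-1) = sqrt ?N ^ i"
  proof -
    have "i = Suc (i-1)" using i2 by simp
    then have "sqrt ?N ^ i = sqrt ?N ^ Suc (i-1)" by simp
    then show ?thesis by simp
  qed
  have key: "exp 1 * sqrt ?N ^ i \<le> (c * ?I * s0) ^ i"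
  proof -
    have e3: "?I^2 * ((?N-?I)/?I) = ?I*(?N-?I)" using I0 by (simp add: power2_eq_square)
    have "?I * s0 = sqrt (?I^2) * sqrt ((?N-?I)/?I)" using I0 by (simp add: s0_def)
    also have "\<dots> = sqrt (?I^2 * ((?N-?I)/?I))" by (rule real_sqrt_mult[symmetric])
    also have "\<dots> = sqrt (?I*(?N-?I))" by (simp only: e3)
    finally have eq: "?I * s0 = sqrt (?I*(?N-?I))" .
    have "sqrt ?N \<le> sqrt (?I*(?N-?I))"
    proof (rule real_sqrt_le_mono)
      have h1: "(?I - 1) * ?N \<ge> (?I - 1) * (2 * ?I)" using NI I2 by (intro mult_left_mono) auto
      have h2: "?I * (?I - 2) \<ge> 0" using I2 by simp
      show "?N \<le> ?I * (?N - ?I)" using h1 h2 by (simp add: algebra_simps)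
    qed
    then have "sqrt ?N \<le> ?I * s0" using eq by simp
    then have "(c * sqrt ?N) ^ i \<le> (c * ?I * s0) ^ i"
      using c0 by (intro power_mono) (auto simp: mult.assoc)
    moreover have "exp 1 * sqrt ?N ^ i \<le> (c * sqrt ?N) ^ i"
    proof -
      have "c ^ 2 \<le> c ^ i" using i2 by (intro power_increasing) (auto simp: c_def)
      moreover have "exp 1 \<le> c ^ 2" by (simp add: c_def exp_of_nat_mult[symmetric])
      ultimately have "exp 1 \<le> c ^ i" by simp
      then show ?thesis by (simp add: power_mult_distrib mult_right_mono)
    qed
    ultimately show ?thesis by simp
  qed
  have "real (multinom n i w) * sqrt ?N ^ (i-1) \<le> exp 1 * sqrt ?N * ?I ^ n / (c^i * s0^i) * sqrt ?N ^ (i-1)"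
    by (rule mult_right_mono[OF M]) simp
  also have "\<dots> = exp 1 * sqrt ?N ^ i * ?I ^ n / (c^i * s0^i)" using sq by (simp add: field_simps)
  also have "\<dots> \<le> (c * ?I * s0) ^ i * ?I ^ n / (c^i * s0^i)"
    by (rule divide_right_mono) (use key c0 s00 in \<open>auto intro: mult_right_mono\<close>)
  also have "\<dots> = ?I ^ (n+i)" using c0 s00 by (simp add: power_mult_distrib power_add field_simps)
  finally show ?thesis .
qed



theorem lemmal:
  fixes n i :: nat
  assumes "n > 0" and "i > 0" and "real n \<ge> (2 * real i) ^ 100"
  shows "real (F n i) \<le> real i ^ (2 * n + i) / real n powr ((real i - 1) / 2)"
proof -
  let ?T = "tuples n i"
  have Fr: "real (F n i) = (\<Sum>v\<in>?T. real (multinom n i v) ^ 2)" by (simp add: F_def of_nat_sum)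
  have ri: "real i - 1 = real (i - 1)" using assms(2) by simp
  have pw: "real n powr ((real i - 1) / 2) = sqrt (real n) ^ (i - 1)"
  proof -
    have "sqrt (real n) ^ (i - 1) = (real n powr (1/2)) powr real (i - 1)"
      using assms(1) by (simp add: powr_realpow powr_half_sqrt)
    also have "\<dots> = real n powr ((real i - 1) / 2)" by (simp add: powr_powr ri)
    finally show ?thesis by simp
  qed
  show ?thesis
  proof (cases "i = 1")
    case True
    have m1: "multinom n i v = 1" if "v \<in> ?T" for v
    proof -
      have "v 0 = n" using that True by (simp add: tuples_def)
      then show ?thesis using True by (simp add: multinom_def)
    qed
    have "real (F n i) = (\<Sum>v\<in>?T. real (multinom n i v))" unfolding Fr by (rule sum.cong) (auto simp: m1)
    also have "\<dots> = 1" using True by (simp add: sum_multinom)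
    finally show ?thesis using True assms(1) by simp
  next
    case False
    then have i2: "i \<ge> 2" using assms(2) by simp
    have "2 * real i \<le> (2 * real i) ^ 100"
      using power_increasing[of 1 100 "2 * real i"] assms(2) by simp
    then have "real (2 * i) \<le> real n" using assms(3) by simp
    then have ni: "2 * i \<le> n" by linarith
    have fin: "finite ?T" by (rule finite_tuples)
    have ne: "(\<lambda>j. if j = 0 then n else 0) \<in> ?T" using assms(2) by (simp add: tuples_def)
    define m where "m = Max (multinom n i ` ?T)"
    have "m \<in> multinom n i ` ?T" unfolding m_def using fin ne by (intro Max_in) auto
    then obtain w where w: "w \<in> ?T" and wm: "multinom n i w = m" by auto
    have max: "\<forall>v\<in>?T. multinom n i v \<le> multinom n i w" using fin wm unfolding m_def by auto
    have bal: "\<And>a b. a < i \<Longrightarrow> b < i \<Longrightarrow> w a \<le> w b + 1"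
      using maximizer_balanced[OF w max] by blast
    have MB: "real (multinom n i w) * sqrt (real n) ^ (i-1) \<le> real i ^ (n+i)"
      by (rule max_bound[OF i2 ni w bal])
    have "real (F n i) \<le> (\<Sum>v\<in>?T. real (multinom n i w) * real (multinom n i v))"
      unfolding Fr power2_eq_square by (rule sum_mono) (use max in \<open>auto intro: mult_right_mono\<close>)
    also have "\<dots> = real (multinom n i w) * real i ^ n" by (simp add: sum_distrib_left[symmetric] sum_multinom)
    finally have Fb: "real (F n i) \<le> real (multinom n i w) * real i ^ n" .
    have sp: "sqrt (real n) ^ (i - 1) > 0" using assms(1) by simp
    have "real (F n i) * sqrt (real n) ^ (i - 1) \<le> real (multinom n i w) * real i ^ n * sqrt (real n) ^ (i - 1)"
      using Fb sp by (intro mult_right_mono) auto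
    also have "\<dots> = (real (multinom n i w) * sqrt (real n) ^ (i-1)) * real i ^ n" by simp
    also have "\<dots> \<le> real i ^ (n+i) * real i ^ n" using MB by (intro mult_right_mono) auto
    also have "\<dots> = real i ^ (2 * n + i)"
    proof -
      have "2*n+i = (n+i)+n" by simp
      then show ?thesis by (simp only: power_add)
    qed
    finally have "real (F n i) * sqrt (real n) ^ (i - 1) \<le> real i ^ (2 * n + i)" .
    then show ?thesis unfolding pw using sp by (simp add: pos_le_divide_eq)
  qed
qed


end
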